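(* Let $A_X$ be an irreducible spherical Artin group with cyclic abelianization (i.e. $X$ not of type $\mathbb{B}_m$, $\mathbb{F}_4$ or $\mathbb{I}_2(2k)$), let $0\ne\chi:A_X\to\mathbb{Z}$ be a character and $\mathbb{F}$ a field. Then $\chi(T_X^{X_v})\ne0$ in $\mathbb{F}[t^{\pm1}]$ for every $v\in X$.
   Context: For a finite set $X$ with labels, $A_X$ is the Artin group and $W_X$ its Coxeter group (add $v^2=1$); spherical means $W_X$ finite, irreducible means the graph on $X$ with edges of label $\ge3$ is connected. For $v\in X$, $X_v=X\setminus\{v\}$, and $W_X^{X_v}$ is the set of elements $w\in W_X$ of minimal word length $l(w)$ in their coset $wW_{X_v}$. For $w\in W_X$, its lift $a_w\in A_X$ is the element $v_1\cdots v_r$ for any reduced expression $w=v_1\cdots v_r$ (well defined). Define $\chi(T_X^{X_v})=\sum_{w\in W_X^{X_v}}(-1)^{l(w)}t^{\chi(a_w)}\in\mathbb{F}[t^{\pm1}]$. *)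

theory Defs
  imports "HOL-Algebra.Solvable_Groups" "HOL-Algebra.Elementary_Groups"
    "HOL-Library.Extended_Nat" "HOL-Computational_Algebra.Formal_Laurent_Series"
begin

text \<open>Words in the generators X and their formal inverses; (x, True) is the inverse of x.\<close>
type_synonym 'a word = "('a \<times> bool) list"

inductive pres_rel :: "'a set \<Rightarrow> ('a word \<times> 'a word) set \<Rightarrow> 'a word \<Rightarrow> 'a word \<Rightarrow> bool"
  for X :: "'a set" and R :: "('a word \<times> 'a word) set" where
  refl: "pres_rel X R w w"
| sym: "pres_rel X R w w' \<Longrightarrow> pres_rel X R w' w"
| trans: "pres_rel X R w w' \<Longrightarrow> pres_rel X R w' w'' \<Longrightarrow> pres_rel X R w w''"
| rel: "(l, r) \<in> R \<Longrightarrow> pres_rel X R (u @ l @ v) (u @ r @ v)"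
| cancel: "x \<in> X \<Longrightarrow> pres_rel X R (u @ [(x, b), (x, \<not> b)] @ v) (u @ v)"

definition cls :: "'a set \<Rightarrow> ('a word \<times> 'a word) set \<Rightarrow> 'a word \<Rightarrow> 'a word set" where
  "cls X R w = {w'. pres_rel X R w w'}"

definition pres_group :: "'a set \<Rightarrow> ('a word \<times> 'a word) set \<Rightarrow> 'a word set monoid" where
  "pres_group X R = \<lparr>carrier = {cls X R w | w. set w \<subseteq> X \<times> UNIV},
     monoid.mult = (\<lambda>A B. cls X R ((SOME a. a \<in> A) @ (SOME b. b \<in> B))),
     one = cls X R []\<rparr>"

definition pos :: "'a list \<Rightarrow> 'a word" where
  "pos xs = map (\<lambda>x. (x, False)) xs"

definition alt :: "'a \<Rightarrow> 'a \<Rightarrow> nat \<Rightarrow> 'a list" where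
  "alt u v k = map (\<lambda>i. if even i then u else v) [0..<k]"

section \<open>Artin and Coxeter groups of a labelled set (X, m); label \<infinity> means no relation\<close>

definition coxeter_matrix :: "'a set \<Rightarrow> ('a \<Rightarrow> 'a \<Rightarrow> enat) \<Rightarrow> bool" where
  "coxeter_matrix X m \<longleftrightarrow> (\<forall>u\<in>X. \<forall>v\<in>X. m u v = m v u \<and> (u \<noteq> v \<longrightarrow> m u v \<ge> 2))"

definition artin_rels :: "'a set \<Rightarrow> ('a \<Rightarrow> 'a \<Rightarrow> enat) \<Rightarrow> ('a word \<times> 'a word) set" where
  "artin_rels X m = {(pos (alt u v k), pos (alt v u k)) | u v k.
      u \<in> X \<and> v \<in> X \<and> u \<noteq> v \<and> m u v = enat k}"

definition coxeter_rels :: "'a set \<Rightarrow> ('a \<Rightarrow> 'a \<Rightarrow> enat) \<Rightarrow> ('a word \<times> 'a word) set" where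
  "coxeter_rels X m = artin_rels X m \<union> {(pos [x, x], []) | x. x \<in> X}"

definition artin_group :: "'a set \<Rightarrow> ('a \<Rightarrow> 'a \<Rightarrow> enat) \<Rightarrow> 'a word set monoid" where
  "artin_group X m = pres_group X (artin_rels X m)"

definition coxeter_group :: "'a set \<Rightarrow> ('a \<Rightarrow> 'a \<Rightarrow> enat) \<Rightarrow> 'a word set monoid" where
  "coxeter_group X m = pres_group X (coxeter_rels X m)"

definition cox_elt :: "'a set \<Rightarrow> ('a \<Rightarrow> 'a \<Rightarrow> enat) \<Rightarrow> 'a list \<Rightarrow> 'a word set" where
  "cox_elt X m xs = cls X (coxeter_rels X m) (pos xs)"

definition art_elt :: "'a set \<Rightarrow> ('a \<Rightarrow> 'a \<Rightarrow> enat) \<Rightarrow> 'a list \<Rightarrow> 'a word set" where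
  "art_elt X m xs = cls X (artin_rels X m) (pos xs)"

definition cox_len :: "'a set \<Rightarrow> ('a \<Rightarrow> 'a \<Rightarrow> enat) \<Rightarrow> 'a word set \<Rightarrow> nat" where
  "cox_len X m w = (LEAST n. \<exists>xs. set xs \<subseteq> X \<and> length xs = n \<and> cox_elt X m xs = w)"

definition reduced_expr :: "'a set \<Rightarrow> ('a \<Rightarrow> 'a \<Rightarrow> enat) \<Rightarrow> 'a word set \<Rightarrow> 'a list \<Rightarrow> bool" where
  "reduced_expr X m w xs \<longleftrightarrow> set xs \<subseteq> X \<and> cox_elt X m xs = w \<and> length xs = cox_len X m w"

text \<open>The lift a_w \<in> A_X of w \<in> W_X, via a reduced expression (well defined by Matsumoto).\<close>
definition artin_lift :: "'a set \<Rightarrow> ('a \<Rightarrow> 'a \<Rightarrow> enat) \<Rightarrow> 'a word set \<Rightarrow> 'a word set" where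
  "artin_lift X m w = art_elt X m (SOME xs. reduced_expr X m w xs)"

definition parabolic :: "'a set \<Rightarrow> ('a \<Rightarrow> 'a \<Rightarrow> enat) \<Rightarrow> 'a set \<Rightarrow> 'a word set set" where
  "parabolic X m Y = generate (coxeter_group X m) ((\<lambda>y. cox_elt X m [y]) ` Y)"

definition min_coset_reps :: "'a set \<Rightarrow> ('a \<Rightarrow> 'a \<Rightarrow> enat) \<Rightarrow> 'a set \<Rightarrow> 'a word set set" where
  "min_coset_reps X m Y = {w \<in> carrier (coxeter_group X m).
      \<forall>u \<in> w <#\<^bsub>coxeter_group X m\<^esub> parabolic X m Y. cox_len X m w \<le> cox_len X m u}"

definition chi_T :: "'a set \<Rightarrow> ('a \<Rightarrow> 'a \<Rightarrow> enat) \<Rightarrow> 'a set \<Rightarrow> ('a word set \<Rightarrow> int) \<Rightarrow> 'f::field fls" where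
  "chi_T X m Y \<chi> = (\<Sum>w \<in> min_coset_reps X m Y.
      (-1) ^ cox_len X m w * fls_X_intpow (\<chi> (artin_lift X m w)))"

definition spherical :: "'a set \<Rightarrow> ('a \<Rightarrow> 'a \<Rightarrow> enat) \<Rightarrow> bool" where
  "spherical X m \<longleftrightarrow> finite (carrier (coxeter_group X m))"

definition irreducible :: "'a set \<Rightarrow> ('a \<Rightarrow> 'a \<Rightarrow> enat) \<Rightarrow> bool" where
  "irreducible X m \<longleftrightarrow> (\<forall>u\<in>X. \<forall>v\<in>X.
      (u, v) \<in> {(x, y). x \<in> X \<and> y \<in> X \<and> x \<noteq> y \<and> m x y \<ge> 3}\<^sup>*)"

definition cyclic_abelianization :: "('b, 'c) monoid_scheme \<Rightarrow> bool" where
  "cyclic_abelianization G \<longleftrightarrow> cyclic_group (G Mod derived G (carrier G))"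

end

theory Submission
  imports Defs
begin

lemma pres_rel_cong:
  "pres_rel X R w w' \<Longrightarrow> pres_rel X R (p @ w @ q) (p @ w' @ q)"
proof (induction rule: pres_rel.induct)
  case (refl w) then show ?case by (rule pres_rel.refl)
next
  case (sym w w') then show ?case by (metis pres_rel.sym)
next
  case (trans w w' w'') then show ?case by (metis pres_rel.trans)
next
  case (rel l r u v)
  from pres_rel.rel[OF rel, where u="p @ u" and v="v @ q"] show ?case by simp
next
  case (cancel x u b v)
  from pres_rel.cancel[OF cancel, where u="p @ u" and b=b and v="v @ q"] show ?case by simp
qed

lemma cls_eq_iff: "cls X R w = cls X R w' \<longleftrightarrow> pres_rel X R w w'"
proof
  assume "cls X R w = cls X R w'"
  moreover have "w' \<in> cls X R w'" by (simp add: cls_def pres_rel.refl)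
  ultimately show "pres_rel X R w w'" unfolding cls_def by blast
next
  assume h: "pres_rel X R w w'"
  show "cls X R w = cls X R w'"
    unfolding cls_def using h pres_rel.trans pres_rel.sym by blast
qed

lemma cls_mem: "w \<in> cls X R w" by (simp add: cls_def pres_rel.refl)

lemma some_cls: "pres_rel X R w (SOME a. a \<in> cls X R w)"
proof -
  have "(SOME a. a \<in> cls X R w) \<in> cls X R w" by (rule someI, rule cls_mem)
  then show ?thesis by (simp add: cls_def)
qed

lemma mult_cls:
  "cls X R w \<otimes>\<^bsub>pres_group X R\<^esub> cls X R w' = cls X R (w @ w')"
proof -
  have 1: "pres_rel X R (w @ w') ((SOME a. a \<in> cls X R w) @ w')"
    using pres_rel_cong[OF some_cls, where p="[]" and q=w'] by simp
  have 2: "pres_rel X R ((SOME a. a \<in> cls X R w) @ w') ((SOME a. a \<in> cls X R w) @ (SOME a. a \<in> cls X R w'))"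
    using pres_rel_cong[OF some_cls, where p="SOME a. a \<in> cls X R w" and q="[]"] by simp
  show ?thesis
    unfolding pres_group_def using pres_rel.sym[OF pres_rel.trans[OF 1 2]] by (simp add: cls_eq_iff)
qed

lemma one_pres: "\<one>\<^bsub>pres_group X R\<^esub> = cls X R []"
  by (simp add: pres_group_def)

lemma carrier_pres: "carrier (pres_group X R) = {cls X R w | w. set w \<subseteq> X \<times> UNIV}"
  by (simp add: pres_group_def)

definition flipw :: "'a word \<Rightarrow> 'a word" where
  "flipw w = rev (map (\<lambda>(x, b). (x, \<not> b)) w)"

lemma flipw_cancel:
  "set w \<subseteq> X \<times> UNIV \<Longrightarrow> pres_rel X R (flipw w @ w) []"
proof (induction w)
  case Nil then show ?case by (simp add: flipw_def pres_rel.refl)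
next
  case (Cons a w)
  obtain x b where a: "a = (x, b)" by (cases a)
  have x: "x \<in> X" using Cons.prems a by auto
  have "flipw (a # w) @ (a # w) = flipw w @ [(x, \<not> b), (x, \<not> \<not> b)] @ w"
    by (simp add: flipw_def a)
  moreover have "pres_rel X R (flipw w @ [(x, \<not> b), (x, \<not> \<not> b)] @ w) (flipw w @ w)"
    by (rule pres_rel.cancel[OF x])
  ultimately show ?case using Cons pres_rel.trans by fastforce
qed

lemma group_pres: "group (pres_group X R)"
proof (rule groupI)
  fix x y assume "x \<in> carrier (pres_group X R)" "y \<in> carrier (pres_group X R)"
  then obtain w w' where "set w \<subseteq> X \<times> UNIV" "x = cls X R w" "set w' \<subseteq> X \<times> UNIV" "y = cls X R w'"
    unfolding carrier_pres by auto
  then show "x \<otimes>\<^bsub>pres_group X R\<^esub> y \<in> carrier (pres_group X R)"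
    unfolding carrier_pres by (auto simp: mult_cls intro!: exI[of _ "w @ w'"])
next
  show "\<one>\<^bsub>pres_group X R\<^esub> \<in> carrier (pres_group X R)"
    unfolding carrier_pres one_pres by auto
next
  fix x y z assume "x \<in> carrier (pres_group X R)" "y \<in> carrier (pres_group X R)"
    "z \<in> carrier (pres_group X R)"
  then show "x \<otimes>\<^bsub>pres_group X R\<^esub> y \<otimes>\<^bsub>pres_group X R\<^esub> z =
       x \<otimes>\<^bsub>pres_group X R\<^esub> (y \<otimes>\<^bsub>pres_group X R\<^esub> z)"
    unfolding carrier_pres by (auto simp: mult_cls)
next
  fix x assume "x \<in> carrier (pres_group X R)"
  then show "\<one>\<^bsub>pres_group X R\<^esub> \<otimes>\<^bsub>pres_group X R\<^esub> x = x"
    unfolding carrier_pres by (auto simp: mult_cls one_pres)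
next
  fix x assume "x \<in> carrier (pres_group X R)"
  then obtain w where w: "set w \<subseteq> X \<times> UNIV" "x = cls X R w" unfolding carrier_pres by auto
  have "set (flipw w) \<subseteq> X \<times> UNIV" using w(1) by (auto simp: flipw_def)
  then show "\<exists>y\<in>carrier (pres_group X R). y \<otimes>\<^bsub>pres_group X R\<^esub> x = \<one>\<^bsub>pres_group X R\<^esub>"
    using w flipw_cancel[OF w(1)] unfolding carrier_pres
    by (intro bexI[of _ "cls X R (flipw w)"]) (auto simp: mult_cls one_pres cls_eq_iff intro: pres_rel.refl)
qed


lemma hom_vanish_derived:
  assumes G: "group G" and f: "f \<in> hom G integer_group"
    and d: "d \<in> derived G (carrier G)"
  shows "f d = 0"
proof -
  interpret group_hom G integer_group f
    using G f by (simp add: group_hom_def group_hom_axioms_def)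
  from d show ?thesis unfolding derived_def
  proof (induction rule: generate.induct)
    case one then show ?case using hom_one by simp
  next
    case (incl h)
    then obtain a b where "a \<in> carrier G" "b \<in> carrier G" "h = a \<otimes>\<^bsub>G\<^esub> b \<otimes>\<^bsub>G\<^esub> inv\<^bsub>G\<^esub> a \<otimes>\<^bsub>G\<^esub> inv\<^bsub>G\<^esub> b" by auto
    then show ?case by (simp add: hom_mult hom_inv)
  next
    case (inv h)
    then obtain a b where "a \<in> carrier G" "b \<in> carrier G" "h = a \<otimes>\<^bsub>G\<^esub> b \<otimes>\<^bsub>G\<^esub> inv\<^bsub>G\<^esub> a \<otimes>\<^bsub>G\<^esub> inv\<^bsub>G\<^esub> b" by auto
    then show ?case by (simp add: hom_mult hom_inv)
  next
    case (eng h1 h2)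
    have "derived G (carrier G) \<subseteq> carrier G"
      by (simp add: G group.derived_incl group.subgroup_self)
    then have "h1 \<in> carrier G" "h2 \<in> carrier G" using eng.hyps unfolding derived_def by auto
    then show ?case using eng.IH by (simp add: hom_mult)
  qed
qed

lemma cyclic_contra:
  assumes G: "group G" and cyc: "cyclic_group (G Mod derived G (carrier G))"
    and f1: "f1 \<in> hom G integer_group" and f2: "f2 \<in> hom G integer_group"
    and h1: "h1 \<in> carrier G" and h2: "h2 \<in> carrier G"
    and e: "f1 h1 = 1" "f2 h1 = 1" "f1 h2 = 0" "f2 h2 = 1"
  shows False
proof -
  interpret group G by (rule G)
  define D where "D = derived G (carrier G)"
  have N: "D \<lhd> G" unfolding D_def by (rule derived_self_is_normal)
  interpret normal D G by (rule N)
  have GM: "group (G Mod D)" by (rule factorgroup_is_group)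
  obtain x where x: "x \<in> carrier (G Mod D)" "carrier (G Mod D) = range (\<lambda>n::int. x [^]\<^bsub>G Mod D\<^esub> n)"
    using cyc group.cyclic_group[OF GM] unfolding D_def by blast
  obtain g where g: "g \<in> carrier G" "x = D #>\<^bsub>G\<^esub> g" using x(1) unfolding carrier_FactGroup by auto
  have key: "\<exists>n::int. \<forall>f \<in> {f1, f2}. f h = n * f g" if h: "h \<in> carrier G" for h
  proof -
    have "D #>\<^bsub>G\<^esub> h \<in> carrier (G Mod D)" unfolding carrier_FactGroup using h by auto
    then obtain n :: int where "D #>\<^bsub>G\<^esub> h = x [^]\<^bsub>G Mod D\<^esub> n" using x(2) by auto
    then have eq: "D #>\<^bsub>G\<^esub> h = D #>\<^bsub>G\<^esub> (g [^]\<^bsub>G\<^esub> n)" using g FactGroup_int_pow by simp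
    have "h \<in> D #>\<^bsub>G\<^esub> h" by (rule rcos_self[OF h subgroup_axioms])
    then have "h \<in> D #>\<^bsub>G\<^esub> (g [^]\<^bsub>G\<^esub> n)" using eq by simp
    then obtain d where d: "d \<in> D" "h = d \<otimes>\<^bsub>G\<^esub> g [^]\<^bsub>G\<^esub> n" unfolding r_coset_def by auto
    have dc: "d \<in> carrier G" using d(1) subset by auto
    have "f h = n * f g" if f: "f \<in> hom G integer_group" for f
    proof -
      have "f h = f d + f (g [^]\<^bsub>G\<^esub> n)" using d(2) dc g(1) f by (simp add: hom_mult)
      also have "f d = 0" using hom_vanish_derived[OF G f] d(1) unfolding D_def by simp
      also have "f (g [^]\<^bsub>G\<^esub> n) = n * f g"
        using hom_int_pow[OF f g(1) G group_integer_group] by simp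
      finally show ?thesis by simp
    qed
    then show ?thesis using f1 f2 by blast
  qed
  obtain n1 where n1: "f1 h1 = n1 * f1 g" "f2 h1 = n1 * f2 g" using key[OF h1] by blast
  obtain n2 where n2: "f1 h2 = n2 * f1 g" "f2 h2 = n2 * f2 g" using key[OF h2] by blast
  have "n1 \<noteq> 0" using n1 e by auto
  then have "f1 g = f2 g" using n1 e by (metis mult_cancel_left)
  then show False using n2 e by (metis mult_eq_0_iff zero_neq_one)
qed

definition wsum :: "('a \<Rightarrow> int) \<Rightarrow> 'a word \<Rightarrow> int" where
  "wsum f w = sum_list (map (\<lambda>(x, b). if b then - f x else f x) w)"

lemma wsum_simps [simp]:
  "wsum f [] = 0" "wsum f (w @ w') = wsum f w + wsum f w'"
  "wsum f ((x, b) # w) = (if b then - f x else f x) + wsum f w"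
  by (auto simp: wsum_def)

lemma wsum_pres:
  assumes "pres_rel X R w w'" and "\<forall>(l, r) \<in> R. wsum f l = wsum f r"
  shows "wsum f w = wsum f w'"
  using assms by (induction rule: pres_rel.induct) auto

definition psi :: "('a \<Rightarrow> int) \<Rightarrow> 'a word set \<Rightarrow> int" where
  "psi f S = wsum f (SOME w. w \<in> S)"

lemma psi_cls:
  assumes "\<forall>(l, r) \<in> R. wsum f l = wsum f r"
  shows "psi f (cls X R w) = wsum f w"
  unfolding psi_def using wsum_pres[OF some_cls assms] by simp

lemma psi_hom:
  assumes "\<forall>(l, r) \<in> R. wsum f l = wsum f r"
  shows "psi f \<in> hom (pres_group X R) integer_group"
  unfolding hom_def carrier_pres
  by (auto simp: mult_cls psi_cls[OF assms])

lemma pos_append [simp]: "pos (xs @ ys) = pos xs @ pos ys" by (simp add: pos_def)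
lemma pos_simps [simp]: "pos [] = []" "pos (x # xs) = (x, False) # pos xs" by (auto simp: pos_def)

lemma wsum_alt:
  "wsum f (pos (alt u v k)) = int ((k + 1) div 2) * f u + int (k div 2) * f v"
proof (induction k)
  case 0 then show ?case by (simp add: alt_def)
next
  case (Suc k)
  have "alt u v (Suc k) = alt u v k @ [if even k then u else v]" by (simp add: alt_def)
  then show ?case using Suc by (cases "even k") (auto simp: algebra_simps elim!: evenE oddE)
qed

lemma chi_cls:
  assumes f: "\<chi> \<in> hom (pres_group X R) integer_group" and w: "set w \<subseteq> X \<times> UNIV"
  shows "\<chi> (cls X R w) = wsum (\<lambda>x. \<chi> (cls X R [(x, False)])) w"
  using w
proof (induction w)
  case Nil
  interpret group_hom "pres_group X R" integer_group \<chi>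
    using f group_pres by (simp add: group_hom_def group_hom_axioms_def)
  show ?case using hom_one by (simp add: one_pres)
next
  case (Cons a w)
  interpret group_hom "pres_group X R" integer_group \<chi>
    using f group_pres by (simp add: group_hom_def group_hom_axioms_def)
  obtain x b where a: "a = (x, b)" by (cases a)
  have x: "x \<in> X" using Cons.prems a by auto
  have c1: "cls X R [(x, c)] \<in> carrier (pres_group X R)" for c
    unfolding carrier_pres using x by (auto intro!: exI[of _ "[(x, c)]"])
  have c2: "cls X R w \<in> carrier (pres_group X R)"
    unfolding carrier_pres using Cons.prems by auto
  have split: "cls X R (a # w) = cls X R [a] \<otimes>\<^bsub>pres_group X R\<^esub> cls X R w"
    by (simp add: mult_cls)
  have "cls X R [(x, True)] \<otimes>\<^bsub>pres_group X R\<^esub> cls X R [(x, False)] = cls X R []"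
    using pres_rel.cancel[OF x, where u="[]" and v="[]" and b=True] by (simp add: mult_cls cls_eq_iff)
  then have "\<chi> (cls X R [(x, True)]) + \<chi> (cls X R [(x, False)]) = 0"
    using hom_mult[OF c1[of True] c1[of False]] hom_one by (simp add: one_pres)
  then have inv: "\<chi> (cls X R [(x, True)]) = - \<chi> (cls X R [(x, False)])" by simp
  show ?case using Cons a split hom_mult[OF c1 c2] inv by auto
qed


lemma set_alt: "set (alt u v k) \<subseteq> {u, v}" by (auto simp: alt_def)

lemma set_pos: "set xs \<subseteq> X \<Longrightarrow> set (pos xs) \<subseteq> X \<times> UNIV" by (auto simp: pos_def)

lemma artin_odd_eq:
  assumes f: "\<chi> \<in> hom (artin_group X m) integer_group"
    and uv: "u \<in> X" "v \<in> X" "u \<noteq> v" "m u v = enat k" "odd k"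
  shows "\<chi> (cls X (artin_rels X m) [(u, False)]) = \<chi> (cls X (artin_rels X m) [(v, False)])"
proof -
  let ?R = "artin_rels X m"
  let ?c = "\<lambda>x. \<chi> (cls X ?R [(x, False)])"
  have f': "\<chi> \<in> hom (pres_group X ?R) integer_group" using f by (simp add: artin_group_def)
  have inR: "(pos (alt u v k), pos (alt v u k)) \<in> ?R" using uv unfolding artin_rels_def by blast
  have "cls X ?R (pos (alt u v k)) = cls X ?R (pos (alt v u k))"
    using pres_rel.rel[OF inR, where u="[]" and v="[]"] by (simp add: cls_eq_iff)
  moreover have "set (pos (alt u v k)) \<subseteq> X \<times> UNIV" "set (pos (alt v u k)) \<subseteq> X \<times> UNIV"
    using set_alt[of u v k] set_alt[of v u k] uv by (auto intro!: set_pos)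
  ultimately have "wsum ?c (pos (alt u v k)) = wsum ?c (pos (alt v u k))"
    using chi_cls[OF f'] by metis
  then have "int ((k + 1) div 2) * ?c u + int (k div 2) * ?c v = int ((k + 1) div 2) * ?c v + int (k div 2) * ?c u"
    by (simp add: wsum_alt)
  moreover have "(k + 1) div 2 = k div 2 + 1" using uv(5) by (auto elim!: oddE)
  ultimately show ?thesis by (simp add: algebra_simps)
qed

lemma artin_resp:
  assumes "\<And>u v k. u \<in> X \<Longrightarrow> v \<in> X \<Longrightarrow> u \<noteq> v \<Longrightarrow> m u v = enat k \<Longrightarrow> odd k \<Longrightarrow> f u = f v"
  shows "\<forall>(l, r) \<in> artin_rels X m. wsum f l = wsum f r"
proof (clarsimp simp: artin_rels_def)
  fix u v k assume uv: "u \<in> X" "v \<in> X" "u \<noteq> v" "m u v = enat k"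
  show "wsum f (pos (alt u v k)) = wsum f (pos (alt v u k))"
  proof (cases "even k")
    case True
    then have "(k + 1) div 2 = k div 2" by (auto elim!: evenE)
    then show ?thesis by (simp add: wsum_alt algebra_simps)
  next
    case False
    then have "f u = f v" using assms uv by blast
    then show ?thesis by (simp add: wsum_alt algebra_simps)
  qed
qed

lemma chi_const:
  assumes f: "\<chi> \<in> hom (artin_group X m) integer_group"
    and cyc: "cyclic_abelianization (artin_group X m)"
    and u: "u \<in> X" and v: "v \<in> X"
  shows "\<chi> (cls X (artin_rels X m) [(u, False)]) = \<chi> (cls X (artin_rels X m) [(v, False)])"
proof (rule ccontr)
  let ?R = "artin_rels X m"
  let ?c = "\<lambda>x. \<chi> (cls X ?R [(x, False)])"
  assume ne: "?c u \<noteq> ?c v"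
  define g1 where "g1 = (\<lambda>x. if ?c x = ?c u then 1 else 0 :: int)"
  define g2 where "g2 = (\<lambda>x::'a. 1 :: int)"
  have r1: "\<forall>(l, r) \<in> ?R. wsum g1 l = wsum g1 r"
    by (rule artin_resp) (auto simp: g1_def dest: artin_odd_eq[OF f])
  have r2: "\<forall>(l, r) \<in> ?R. wsum g2 l = wsum g2 r"
    by (rule artin_resp) (auto simp: g2_def)
  have G: "group (artin_group X m)" by (simp add: artin_group_def group_pres)
  have cu: "cls X ?R [(u, False)] \<in> carrier (artin_group X m)"
    using u unfolding artin_group_def carrier_pres by (auto intro!: exI[of _ "[(u, False)]"])
  have cv: "cls X ?R [(v, False)] \<in> carrier (artin_group X m)"
    using v unfolding artin_group_def carrier_pres by (auto intro!: exI[of _ "[(v, False)]"])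
  show False
    apply (rule cyclic_contra[OF G cyc[unfolded cyclic_abelianization_def]
          psi_hom[OF r1, where X=X, folded artin_group_def] psi_hom[OF r2, where X=X, folded artin_group_def] cu cv])
    unfolding psi_cls[OF r1] psi_cls[OF r2] using ne by (auto simp: g1_def g2_def)
qed


lemma cox_pos:
  assumes "set ws \<subseteq> X \<times> UNIV"
  shows "pres_rel X (coxeter_rels X m) ws (pos (map fst ws))"
  using assms
proof (induction ws)
  case Nil then show ?case by (simp add: pres_rel.refl)
next
  case (Cons a ws)
  let ?R = "coxeter_rels X m"
  obtain x b where a: "a = (x, b)" by (cases a)
  have x: "x \<in> X" using Cons.prems a by auto
  have single: "pres_rel X ?R [(x, b)] [(x, False)]"
  proof (cases b)
    case True
    have inR: "(pos [x, x], []) \<in> ?R" using x by (auto simp: coxeter_rels_def)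
    have 1: "pres_rel X ?R [(x, True)] ([(x, True)] @ [(x, False), (x, False)])"
      using pres_rel.sym[OF pres_rel.rel[OF inR, where u="[(x, True)]" and v="[]"]] by (simp add: pos_def)
    have 2: "pres_rel X ?R ([] @ [(x, True), (x, \<not> True)] @ [(x, False)]) ([] @ [(x, False)])"
      by (rule pres_rel.cancel[OF x])
    show ?thesis using pres_rel.trans[OF 1] 2 True by simp
  next
    case False then show ?thesis by (simp add: pres_rel.refl)
  qed
  have 1: "pres_rel X ?R ([] @ [(x, b)] @ ws) ([] @ [(x, False)] @ ws)"
    by (rule pres_rel_cong[OF single])
  have 2: "pres_rel X ?R ([(x, False)] @ ws @ []) ([(x, False)] @ pos (map fst ws) @ [])"
    by (rule pres_rel_cong[OF Cons.IH]) (use Cons.prems in auto)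
  show ?case using pres_rel.trans[OF 1] 2 a by simp
qed

lemma cox_carrier_elt:
  assumes "w \<in> carrier (coxeter_group X m)"
  shows "\<exists>xs. set xs \<subseteq> X \<and> cox_elt X m xs = w"
proof -
  obtain ws where ws: "set ws \<subseteq> X \<times> UNIV" "w = cls X (coxeter_rels X m) ws"
    using assms unfolding coxeter_group_def carrier_pres by auto
  show ?thesis
    using ws cox_pos[OF ws(1)]
    by (intro exI[of _ "map fst ws"]) (auto simp: cox_elt_def cls_eq_iff pres_rel.sym)
qed

lemma cox_reduced:
  assumes "w \<in> carrier (coxeter_group X m)"
  shows "reduced_expr X m w (SOME xs. reduced_expr X m w xs)"
proof -
  have "\<exists>n xs. set xs \<subseteq> X \<and> length xs = n \<and> cox_elt X m xs = w"
    using cox_carrier_elt[OF assms] by blast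
  from LeastI_ex[OF this] obtain xs where
    "set xs \<subseteq> X \<and> length xs = cox_len X m w \<and> cox_elt X m xs = w"
    unfolding cox_len_def by blast
  then have "reduced_expr X m w xs" by (simp add: reduced_expr_def)
  then show ?thesis by (rule someI)
qed

lemma cox_len_one: "cox_len X m (\<one>\<^bsub>coxeter_group X m\<^esub>) = 0"
  unfolding cox_len_def
  by (rule Least_eq_0, rule exI[of _ "[]"]) (simp add: cox_elt_def coxeter_group_def one_pres)

lemma cox_len_zero:
  assumes "w \<in> carrier (coxeter_group X m)" "cox_len X m w = 0"
  shows "w = \<one>\<^bsub>coxeter_group X m\<^esub>"
  using cox_reduced[OF assms(1)] assms(2)
  by (auto simp: reduced_expr_def cox_elt_def coxeter_group_def one_pres)

lemma coeff_term:
  "fls_nth ((-1) ^ k * fls_X_intpow i :: 'f::field fls) 0 = (if i = 0 then (-1) ^ k else 0)"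
proof (cases "even k")
  case True then show ?thesis by simp
next
  case False then show ?thesis by simp
qed

theorem lemma6p3:
  fixes X :: "'a set" and m :: "'a \<Rightarrow> 'a \<Rightarrow> enat"
    and \<chi> :: "'a word set \<Rightarrow> int"
  assumes "finite X"
    and "coxeter_matrix X m"
    and "spherical X m"
    and "irreducible X m"
    and "cyclic_abelianization (artin_group X m)"
    and "\<chi> \<in> hom (artin_group X m) integer_group"
    and "\<exists>g \<in> carrier (artin_group X m). \<chi> g \<noteq> 0"
  shows "\<forall>v \<in> X. (chi_T X m (X - {v}) \<chi> :: 'f::field fls) \<noteq> 0"
proof
  fix v assume v: "v \<in> X"
  let ?R = "artin_rels X m"
  let ?W = "coxeter_group X m"
  define c where "c = (\<lambda>x. \<chi> (cls X ?R [(x, False)]))"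
  have f': "\<chi> \<in> hom (pres_group X ?R) integer_group" using assms(6) by (simp add: artin_group_def)
  have const: "c x = c v" if "x \<in> X" for x
    unfolding c_def by (rule chi_const[OF assms(6) assms(5) that v])
  have wc: "wsum c w = c v * int (length w)" if "set w \<subseteq> X \<times> {False}" for w
    using that
  proof (induction w)
    case (Cons a w)
    then show ?case using const by (cases a) (auto simp: algebra_simps)
  qed simp
  have cnz: "c v \<noteq> 0"
  proof
    assume c0: "c v = 0"
    obtain g where g: "g \<in> carrier (artin_group X m)" "\<chi> g \<noteq> 0" using assms(7) by blast
    then obtain ws where ws: "set ws \<subseteq> X \<times> UNIV" "g = cls X ?R ws"
      unfolding artin_group_def carrier_pres by auto
    have "wsum c ws = 0" using ws(1)
    proof (induction ws)
      case (Cons a w)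
      then show ?case using const c0 by (cases a) auto
    qed simp
    then show False using g(2) chi_cls[OF f' ws(1)] ws(2) by (simp add: c_def)
  qed
  have lift: "\<chi> (artin_lift X m w) = c v * int (cox_len X m w)" if w: "w \<in> carrier ?W" for w
  proof -
    define xs where "xs = (SOME xs. reduced_expr X m w xs)"
    have r: "reduced_expr X m w xs" unfolding xs_def by (rule cox_reduced[OF w])
    have "set (pos xs) \<subseteq> X \<times> {False}" using r by (auto simp: reduced_expr_def pos_def)
    then have "\<chi> (art_elt X m xs) = c v * int (length (pos xs))"
      using chi_cls[OF f', of "pos xs"] wc unfolding art_elt_def c_def by auto
    then show ?thesis unfolding artin_lift_def xs_def[symmetric] using r by (simp add: reduced_expr_def pos_def)
  qed
  define M where "M = min_coset_reps X m (X - {v})"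
  have Msub: "M \<subseteq> carrier ?W" unfolding M_def min_coset_reps_def by auto
  have finM: "finite M" using assms(3) Msub unfolding spherical_def by (rule finite_subset[rotated])
  have oneM: "\<one>\<^bsub>?W\<^esub> \<in> M"
    unfolding M_def min_coset_reps_def cox_len_one
    using cox_len_one[of X m, unfolded coxeter_group_def one_pres]
    by (auto simp: coxeter_group_def one_pres carrier_pres intro!: exI[of _ "[]"])
  have trm: "fls_nth ((-1) ^ cox_len X m w * fls_X_intpow (\<chi> (artin_lift X m w)) :: 'f fls) 0
      = (if w = \<one>\<^bsub>?W\<^esub> then 1 else 0)" if w: "w \<in> M" for w
  proof -
    have wc: "w \<in> carrier ?W" using w Msub by auto
    show ?thesis
    proof (cases "w = \<one>\<^bsub>?W\<^esub>")
      case True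
      then have "cox_len X m w = 0" using cox_len_one by simp
      then show ?thesis unfolding coeff_term lift[OF wc] using True by simp
    next
      case False
      then have "cox_len X m w \<noteq> 0" using cox_len_zero[OF wc] by blast
      then have "c v * int (cox_len X m w) \<noteq> 0" using cnz by simp
      then show ?thesis unfolding coeff_term lift[OF wc] using False by simp
    qed
  qed
  have "fls_nth (chi_T X m (X - {v}) \<chi> :: 'f fls) 0 = 1"
  proof -
    have "fls_nth (chi_T X m (X - {v}) \<chi> :: 'f fls) 0 = (\<Sum>w\<in>M. (if w = \<one>\<^bsub>?W\<^esub> then 1 else 0))"
      unfolding chi_T_def M_def[symmetric] fls_nth_sum by (rule sum.cong[OF HOL.refl trm])
    also have "\<dots> = 1" using finM oneM by (simp add: sum.delta)
    finally show ?thesis .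
  qed
  then show "(chi_T X m (X - {v}) \<chi> :: 'f fls) \<noteq> 0" by auto
qed

end
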